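(* Let $G\in\Phi$. Then for any two distinct vertices $u_1,u_2$ of $G$, $b(G/u_1u_2)\in\{1,3\}$.
   Context: Graphs are finite, undirected, possibly with loops and parallel edges. A graph is non-separable if it is connected, has no cut-vertex, and either has no loops or has exactly one vertex and one edge; a block is a maximal non-separable subgraph; $b(G)$ is the number of blocks of $G$ with at least one edge. $G/u_1u_2$ is obtained by identifying vertices $u_1,u_2$ (edges joining them become loops); $G/e$ is contraction of edge $e$. $\Phi$ is the set of non-separable graphs $G$ with $|V(G)|\ge 2$ such that: (a') $G-e$ is non-separable for every edge $e$; (b') $b(G/e)$ is even for every edge $e$; (c') whenever $G_1,G_2$ are subgraphs of $G$ with $|E(G_1)|,|E(G_2)|\ge 2$, $V(G_1)\cap V(G_2)=\{u_1,u_2\}$ (distinct), $V(G_1)\cup V(G_2)=V(G)$, $E(G_1)\cap E(G_2)=\emptyset$, $E(G_1)\cup E(G_2)=E(G)$, the integers $b(G_1/u_1u_2)$, $b(G_1)-1$, $b(G_2)$ all have the same parity. *)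

theory Defs
  imports Main
begin

text \<open>Finite multigraphs with loops and parallel edges.  Each edge e has a set of
  ends (one vertex for a loop, two vertices otherwise).\<close>

record ('v, 'e) mgraph =
  verts :: "'v set"
  edges :: "'e set"
  ends  :: "'e \<Rightarrow> 'v set"

definition wf_graph :: "('v, 'e) mgraph \<Rightarrow> bool" where
  "wf_graph G \<longleftrightarrow> finite (verts G) \<and> finite (edges G) \<and>
     (\<forall>e\<in>edges G. ends G e \<subseteq> verts G \<and> 1 \<le> card (ends G e) \<and> card (ends G e) \<le> 2)"

definition is_loop :: "('v, 'e) mgraph \<Rightarrow> 'e \<Rightarrow> bool" where
  "is_loop G e \<longleftrightarrow> card (ends G e) = 1"

definition subgraph :: "('v, 'e) mgraph \<Rightarrow> ('v, 'e) mgraph \<Rightarrow> bool" where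
  "subgraph H G \<longleftrightarrow> verts H \<subseteq> verts G \<and> edges H \<subseteq> edges G \<and> ends H = ends G \<and>
     (\<forall>e\<in>edges H. ends G e \<subseteq> verts H)"

definition edge_rel :: "('v, 'e) mgraph \<Rightarrow> ('v \<times> 'v) set" where
  "edge_rel G = {(x, y). \<exists>e\<in>edges G. x \<in> ends G e \<and> y \<in> ends G e}"

definition connected_graph :: "('v, 'e) mgraph \<Rightarrow> bool" where
  "connected_graph G \<longleftrightarrow> verts G \<noteq> {} \<and>
     (\<forall>x\<in>verts G. \<forall>y\<in>verts G. (x, y) \<in> (edge_rel G)\<^sup>*)"

definition delete_vertex :: "('v, 'e) mgraph \<Rightarrow> 'v \<Rightarrow> ('v, 'e) mgraph" where
  "delete_vertex G v = \<lparr>verts = verts G - {v}, edges = {e\<in>edges G. v \<notin> ends G e},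
     ends = ends G\<rparr>"

definition delete_edge :: "('v, 'e) mgraph \<Rightarrow> 'e \<Rightarrow> ('v, 'e) mgraph" where
  "delete_edge G e = \<lparr>verts = verts G, edges = edges G - {e}, ends = ends G\<rparr>"

definition cut_vertex :: "('v, 'e) mgraph \<Rightarrow> 'v \<Rightarrow> bool" where
  "cut_vertex G v \<longleftrightarrow> v \<in> verts G \<and>
     (\<exists>x\<in>verts G - {v}. \<exists>y\<in>verts G - {v}. (x, y) \<in> (edge_rel G)\<^sup>* \<and>
        (x, y) \<notin> (edge_rel (delete_vertex G v))\<^sup>*)"

definition nonseparable :: "('v, 'e) mgraph \<Rightarrow> bool" where
  "nonseparable G \<longleftrightarrow> connected_graph G \<and> (\<forall>v. \<not> cut_vertex G v) \<and>
     ((\<forall>e\<in>edges G. \<not> is_loop G e) \<or> (card (verts G) = 1 \<and> card (edges G) = 1))"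

definition blocks :: "('v, 'e) mgraph \<Rightarrow> ('v, 'e) mgraph set" where
  "blocks G = {H. subgraph H G \<and> nonseparable H \<and>
      (\<forall>H'. subgraph H' G \<and> nonseparable H' \<and> subgraph H H' \<longrightarrow> H' = H)}"

definition nblocks :: "('v, 'e) mgraph \<Rightarrow> nat" where
  "nblocks G = card {H \<in> blocks G. edges H \<noteq> {}}"

text \<open>G/u1u2: identify u2 with u1 (edges joining them become loops).\<close>
definition identify :: "('v, 'e) mgraph \<Rightarrow> 'v \<Rightarrow> 'v \<Rightarrow> ('v, 'e) mgraph" where
  "identify G u1 u2 = \<lparr>verts = verts G - {u2}, edges = edges G,
     ends = (\<lambda>e. (\<lambda>x. if x = u2 then u1 else x) ` ends G e)\<rparr>"

definition contract :: "('v, 'e) mgraph \<Rightarrow> 'e \<Rightarrow> ('v, 'e) mgraph" where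
  "contract G e =
     (if is_loop G e then delete_edge G e
      else (let x = (SOME x. x \<in> ends G e); y = (SOME y. y \<in> ends G e \<and> y \<noteq> x)
            in identify (delete_edge G e) x y))"

definition Phi :: "('v, 'e) mgraph \<Rightarrow> bool" where
  "Phi G \<longleftrightarrow> wf_graph G \<and> nonseparable G \<and> card (verts G) \<ge> 2 \<and>
     (\<forall>e\<in>edges G. nonseparable (delete_edge G e)) \<and>
     (\<forall>e\<in>edges G. even (nblocks (contract G e))) \<and>
     (\<forall>G1 G2 u1 u2. subgraph G1 G \<and> subgraph G2 G \<and>
        card (edges G1) \<ge> 2 \<and> card (edges G2) \<ge> 2 \<and> u1 \<noteq> u2 \<and>
        verts G1 \<inter> verts G2 = {u1, u2} \<and> verts G1 \<union> verts G2 = verts G \<and>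
        edges G1 \<inter> edges G2 = {} \<and> edges G1 \<union> edges G2 = edges G \<longrightarrow>
        (even (int (nblocks (identify G1 u1 u2))) \<longleftrightarrow> even (int (nblocks G1) - 1)) \<and>
        (even (int (nblocks G1) - 1) \<longleftrightarrow> even (int (nblocks G2))))"

end

theory Submission
  imports Defs
begin

definition eR :: "('v,'e) mgraph \<Rightarrow> 'e set \<Rightarrow> 'v set \<Rightarrow> ('v\<times>'v) set" where
 "eR K E A = {(x,y). \<exists>e\<in>E. ends K e \<subseteq> A \<and> x \<in> ends K e \<and> y \<in> ends K e}"

lemma edge_rel_eR: "edge_rel K = eR K (edges K) UNIV"
  by (auto simp: edge_rel_def eR_def)

lemma edge_rel_del_eR: "edge_rel (delete_vertex K v) = eR K (edges K) (-{v})"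
  by (auto simp: edge_rel_def eR_def delete_vertex_def)

lemma eR_mono: "E \<subseteq> E' \<Longrightarrow> A \<subseteq> A' \<Longrightarrow> eR K E A \<subseteq> eR K E' A'"
  by (auto simp: eR_def)

lemma eR_rtr_mono: "(x,y) \<in> (eR K E A)\<^sup>* \<Longrightarrow> E \<subseteq> E' \<Longrightarrow> A \<subseteq> A' \<Longrightarrow> (x,y) \<in> (eR K E' A')\<^sup>*"
  by (meson eR_mono rtrancl_mono subsetD)

lemma eR_sym: "(x,y) \<in> (eR K E A)\<^sup>* \<Longrightarrow> (y,x) \<in> (eR K E A)\<^sup>*"
proof -
  have "sym (eR K E A)" by (auto simp: sym_def eR_def)
  then have "sym ((eR K E A)\<^sup>*)" by (rule sym_rtrancl)
  then show "(x,y) \<in> (eR K E A)\<^sup>* \<Longrightarrow> (y,x) \<in> (eR K E A)\<^sup>*" by (auto simp: sym_def)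
qed

lemma eR_closed: "(x,y) \<in> (eR K E A)\<^sup>* \<Longrightarrow> x \<in> A \<Longrightarrow> y \<in> A"
  by (induction rule: rtrancl_induct) (auto simp: eR_def)

lemma eR_ends_univ: "(\<forall>e\<in>E. ends K e \<subseteq> A) \<Longrightarrow> eR K E UNIV = eR K E A"
  by (auto simp: eR_def)

lemma rtrancl_closed_sub:
  assumes "(x,y) \<in> r\<^sup>*" "x \<in> C" "\<And>u w. (u,w) \<in> r \<Longrightarrow> u \<in> C \<Longrightarrow> w \<in> C \<and> (u,w) \<in> s"
  shows "(x,y) \<in> s\<^sup>* \<and> y \<in> C"
  using assms(1)
proof (induction rule: rtrancl_induct)
  case base then show ?case using assms(2) by simp
next
  case (step y z)
  then show ?case using assms(3)[of y z] by (meson rtrancl.rtrancl_into_rtrancl)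
qed

lemma two_elems: "card X \<le> 2 \<Longrightarrow> 1 \<le> card X \<Longrightarrow> x \<in> X \<Longrightarrow> y \<in> X \<Longrightarrow> x \<noteq> y \<Longrightarrow> X = {x,y}"
proof -
  assume h: "card X \<le> 2" "1 \<le> card X" "x \<in> X" "y \<in> X" "x \<noteq> y"
  then have f: "finite X" using card.infinite by fastforce
  have "{x,y} \<subseteq> X" using h by auto
  moreover have "card {x,y} = card X" using h card_mono[OF f \<open>{x,y} \<subseteq> X\<close>] by simp
  ultimately show ?thesis using f card_subset_eq by metis
qed

lemma cut_vertexI_conn:
  assumes "\<And>x y. x \<in> verts K - {v} \<Longrightarrow> y \<in> verts K - {v} \<Longrightarrow> (x,y) \<in> (eR K (edges K) (-{v}))\<^sup>*"
  shows "\<not> cut_vertex K v"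
  using assms by (auto simp: cut_vertex_def edge_rel_del_eR)

lemma conn_from_target:
  assumes "\<And>x. x \<in> V \<Longrightarrow> (x,t) \<in> (eR K E A)\<^sup>*" "x \<in> V" "y \<in> V"
  shows "(x,y) \<in> (eR K E A)\<^sup>*"
  using assms eR_sym by (meson rtrancl_trans)

definition subg_ok :: "('v,'e) mgraph \<Rightarrow> bool" where
  "subg_ok K \<longleftrightarrow> (\<forall>e\<in>edges K. ends K e \<subseteq> verts K)"

lemma subgraph_antisym: "subgraph A B \<Longrightarrow> subgraph B A \<Longrightarrow> A = (B::('v,'e) mgraph)"
  unfolding subgraph_def by (intro mgraph.equality) auto

lemma nblocks_one:
  assumes "nonseparable K" "edges K \<noteq> {}" "subg_ok K"
  shows "nblocks K = 1"
proof -
  have sK: "subgraph K K" using assms(3) by (auto simp: subgraph_def subg_ok_def)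
  have "blocks K = {K}"
  proof
    have "K \<in> blocks K" unfolding blocks_def
      using sK assms(1) subgraph_antisym by blast
    then show "{K} \<subseteq> blocks K" by simp
    show "blocks K \<subseteq> {K}"
    proof
      fix H assume "H \<in> blocks K"
      then have "subgraph H K" "\<forall>H'. subgraph H' K \<and> nonseparable H' \<and> subgraph H H' \<longrightarrow> H' = H"
        unfolding blocks_def by blast+
      then show "H \<in> {K}" using sK assms(1) by blast
    qed
  qed
  then have "{H \<in> blocks K. edges H \<noteq> {}} = {K}" using assms(2) by auto
  then show ?thesis by (simp add: nblocks_def)
qed


definition Rs :: "('v,'e) mgraph \<Rightarrow> 'v \<Rightarrow> 'v \<Rightarrow> 'v set" where
  "Rs G a b = verts G - {a,b}"
definition cmp :: "('v,'e) mgraph \<Rightarrow> 'v \<Rightarrow> 'v \<Rightarrow> 'v \<Rightarrow> 'v set" where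
  "cmp G a b x = {y. (x,y) \<in> (eR G (edges G) (Rs G a b))\<^sup>*}"
definition comps :: "('v,'e) mgraph \<Rightarrow> 'v \<Rightarrow> 'v \<Rightarrow> 'v set set" where
  "comps G a b = cmp G a b ` Rs G a b"
definition EC :: "('v,'e) mgraph \<Rightarrow> 'v set \<Rightarrow> 'e set" where
  "EC G C = {e \<in> edges G. ends G e \<inter> C \<noteq> {}}"
definition Q :: "('v,'e) mgraph \<Rightarrow> 'v \<Rightarrow> 'v \<Rightarrow> 'v set \<Rightarrow> ('v,'e) mgraph" where
  "Q G a b C = \<lparr>verts = insert a C, edges = EC G C, ends = ends (identify G a b)\<rparr>"
definition Lg :: "('v,'e) mgraph \<Rightarrow> 'v \<Rightarrow> 'v \<Rightarrow> 'e \<Rightarrow> ('v,'e) mgraph" where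
  "Lg G a b e = \<lparr>verts = {a}, edges = {e}, ends = ends (identify G a b)\<rparr>"
definition E12 :: "('v,'e) mgraph \<Rightarrow> 'v \<Rightarrow> 'v \<Rightarrow> 'e set" where
  "E12 G a b = {e \<in> edges G. ends G e = {a,b}}"

locale twoc =
  fixes G :: "('v,'e) mgraph" and a b :: 'v
  assumes wf: "wf_graph G" and ns: "nonseparable G"
    and av: "a \<in> verts G" and bv: "b \<in> verts G" and ab: "a \<noteq> b"
begin

abbreviation "R \<equiv> Rs G a b"
abbreviation "cps \<equiv> comps G a b"

lemma finV: "finite (verts G)" using wf by (simp add: wf_graph_def)
lemma finE: "finite (edges G)" using wf by (simp add: wf_graph_def)
lemma ends_sub: "e \<in> edges G \<Longrightarrow> ends G e \<subseteq> verts G" using wf by (simp add: wf_graph_def)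

lemma card_ends: "e \<in> edges G \<Longrightarrow> card (ends G e) = 2"
proof -
  assume e: "e \<in> edges G"
  have c2: "card (verts G) \<ge> 2"
  proof -
    have "{a,b} \<subseteq> verts G" using av bv by auto
    then have "card {a,b} \<le> card (verts G)" by (rule card_mono[OF finV])
    then show ?thesis using ab by simp
  qed
  have "\<not> is_loop G e" using ns c2 e unfolding nonseparable_def by auto
  moreover have "1 \<le> card (ends G e) \<and> card (ends G e) \<le> 2" using wf e unfolding wf_graph_def by blast
  ultimately show ?thesis unfolding is_loop_def by linarith
qed

lemma ends2: "e \<in> edges G \<Longrightarrow> \<exists>p q. p \<noteq> q \<and> ends G e = {p,q}"
  using card_ends[unfolded card_2_iff] by blast

lemma ends_pair: "e \<in> edges G \<Longrightarrow> x \<in> ends G e \<Longrightarrow> y \<in> ends G e \<Longrightarrow> x \<noteq> y \<Longrightarrow> ends G e = {x,y}"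
  using ends2 by fastforce

lemma ends_ne: "e \<in> edges G \<Longrightarrow> ends G e \<noteq> {}"
  using card_ends by fastforce

lemma conn: "x \<in> verts G \<Longrightarrow> y \<in> verts G \<Longrightarrow> (x,y) \<in> (eR G (edges G) UNIV)\<^sup>*"
  using ns by (auto simp: nonseparable_def connected_graph_def edge_rel_eR)

lemma conn_del: assumes "x \<in> verts G - {v}" "y \<in> verts G - {v}"
  shows "(x,y) \<in> (eR G (edges G) (-{v}))\<^sup>*"
proof (cases "v \<in> verts G")
  case True
  have "\<not> cut_vertex G v" using ns by (simp add: nonseparable_def)
  have "(x,y) \<in> (edge_rel G)\<^sup>*" using conn assms by (simp add: edge_rel_eR)
  then have "(x,y) \<in> (edge_rel (delete_vertex G v))\<^sup>*"
    using \<open>\<not> cut_vertex G v\<close> True assms unfolding cut_vertex_def by blast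
  then show ?thesis by (simp add: edge_rel_del_eR)
next
  case False
  then have "eR G (edges G) UNIV = eR G (edges G) (-{v})"
    using ends_sub by (intro eR_ends_univ) blast
  then show ?thesis using conn assms by auto
qed

lemma exit:
  assumes "(x,y) \<in> (eR G (edges G) A)\<^sup>*" "x \<in> C" "y \<notin> C"
  shows "\<exists>x' z e. (x,x') \<in> (eR G (edges G) (A \<inter> C))\<^sup>* \<and> x' \<in> C \<and> z \<notin> C \<and> e \<in> edges G \<and>
          ends G e \<subseteq> A \<and> x' \<in> ends G e \<and> z \<in> ends G e"
  using assms
proof (induction rule: converse_rtrancl_induct)
  case base then show ?case by simp
next
  case (step x x1)
  from step.hyps(1) obtain e1 where e1: "e1 \<in> edges G" "ends G e1 \<subseteq> A" "x \<in> ends G e1" "x1 \<in> ends G e1"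
    by (auto simp: eR_def)
  show ?case
  proof (cases "x1 \<in> C")
    case False
    show ?thesis using e1 step.prems False by fast
  next
    case True
    then obtain x' z e where IH: "(x1,x') \<in> (eR G (edges G) (A \<inter> C))\<^sup>*" "x' \<in> C" "z \<notin> C" "e \<in> edges G"
          "ends G e \<subseteq> A" "x' \<in> ends G e" "z \<in> ends G e" using step.IH step.prems by blast
    have "(x,x1) \<in> (eR G (edges G) (A \<inter> C))\<^sup>*"
    proof (cases "x = x1")
      case False
      then have "ends G e1 = {x,x1}" using ends_pair e1 by blast
      then have "ends G e1 \<subseteq> A \<inter> C" using e1 True step.prems by auto
      then have "(x,x1) \<in> eR G (edges G) (A \<inter> C)" unfolding eR_def using e1(1,3,4) by blast
      then show ?thesis by blast
    qed simp
    then have "(x,x') \<in> (eR G (edges G) (A \<inter> C))\<^sup>*" using IH(1) by (rule rtrancl_trans)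
    then show ?thesis using IH(2-7) by fast
  qed
qed

lemma R_sub: "R \<subseteq> verts G" by (auto simp: Rs_def)
lemma finR: "finite R" using finV R_sub finite_subset by blast

lemma rtr_in: "(x,y) \<in> (eR K E A)\<^sup>* \<Longrightarrow> x = y \<or> y \<in> A"
proof (induction rule: rtrancl_induct)
  case (step y z) then show ?case by (auto simp: eR_def)
qed simp

lemma comp_sub: "cmp G a b x \<subseteq> insert x R"
  unfolding cmp_def using rtr_in by fastforce


lemma comp_self: "x \<in> cmp G a b x" by (simp add: cmp_def)

lemma comp_trans: "y \<in> cmp G a b x \<Longrightarrow> z \<in> cmp G a b y \<Longrightarrow> z \<in> cmp G a b x"
  unfolding cmp_def using rtrancl_trans[of x y _ z] by simp

lemma comp_symm: "y \<in> cmp G a b x \<Longrightarrow> x \<in> cmp G a b y"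
  unfolding cmp_def using eR_sym by fast

lemma comp_eq: "y \<in> cmp G a b x \<Longrightarrow> cmp G a b y = cmp G a b x"
  using comp_trans comp_symm by blast

lemma comp_closed: "y \<in> cmp G a b x \<Longrightarrow> (y,z) \<in> eR G (edges G) R \<Longrightarrow> z \<in> cmp G a b x"
  unfolding cmp_def using rtrancl.rtrancl_into_rtrancl[of x y _ z] by simp

lemma comp_R: "x \<in> R \<Longrightarrow> cmp G a b x \<subseteq> R"
  using comp_sub by blast

lemma cps_sub: "C \<in> cps \<Longrightarrow> C \<subseteq> R"
  unfolding comps_def using comp_R by blast

lemma cps_ne: "C \<in> cps \<Longrightarrow> C \<noteq> {}"
  unfolding comps_def using comp_self by blast

lemma cps_comp: "C \<in> cps \<Longrightarrow> x \<in> C \<Longrightarrow> C = cmp G a b x"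
  unfolding comps_def using comp_eq by blast

lemma cps_disj: "C \<in> cps \<Longrightarrow> C' \<in> cps \<Longrightarrow> x \<in> C \<Longrightarrow> x \<in> C' \<Longrightarrow> C = C'"
  using cps_comp by metis

lemma cps_Un: "\<Union>cps = R"
proof
  show "\<Union>cps \<subseteq> R" using cps_sub by blast
  show "R \<subseteq> \<Union>cps" unfolding comps_def using comp_self by blast
qed

lemma fin_cps: "finite cps" unfolding comps_def using finR by simp

lemma ab_notin: "C \<in> cps \<Longrightarrow> a \<notin> C \<and> b \<notin> C"
  using cps_sub by (auto simp: Rs_def)

lemma fin_C: "C \<in> cps \<Longrightarrow> finite C"
  using cps_sub finR finite_subset by blast

lemma adj_R: "C \<in> cps \<Longrightarrow> p \<in> C \<Longrightarrow> e \<in> edges G \<Longrightarrow> p \<in> ends G e \<Longrightarrow> q \<in> ends G e \<Longrightarrow> q \<in> R \<Longrightarrow> q \<in> C"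
proof -
  assume h: "C \<in> cps" "p \<in> C" "e \<in> edges G" "p \<in> ends G e" "q \<in> ends G e" "q \<in> R"
  show "q \<in> C"
  proof (cases "p = q")
    case False
    then have "ends G e = {p,q}" using ends_pair h by blast
    moreover have "p \<in> R" using h cps_sub by blast
    ultimately have "ends G e \<subseteq> R" using h by simp
    then have "(p,q) \<in> eR G (edges G) R" unfolding eR_def using h(3,4,5) by blast
    moreover have "C = cmp G a b p" using h cps_comp by blast
    ultimately show ?thesis using comp_closed comp_self by blast
  qed (use h in simp)
qed

lemma EC_ends: "C \<in> cps \<Longrightarrow> e \<in> EC G C \<Longrightarrow> ends G e \<subseteq> insert a (insert b C)"
proof
  fix q assume h: "C \<in> cps" "e \<in> EC G C" "q \<in> ends G e"
  then obtain p where p: "p \<in> C" "p \<in> ends G e" "e \<in> edges G" unfolding EC_def by blast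
  have "q \<in> verts G" using ends_sub h p by blast
  then show "q \<in> insert a (insert b C)" using adj_R[OF h(1) p(1) p(3) p(2) h(3)] by (auto simp: Rs_def)
qed

lemma EC_disj: "C \<in> cps \<Longrightarrow> C' \<in> cps \<Longrightarrow> C \<noteq> C' \<Longrightarrow> EC G C \<inter> EC G C' = {}"
proof (rule ccontr)
  assume h: "C \<in> cps" "C' \<in> cps" "C \<noteq> C'" "EC G C \<inter> EC G C' \<noteq> {}"
  then obtain e where e: "e \<in> EC G C" "e \<in> EC G C'" by blast
  then obtain p where p: "p \<in> C" "p \<in> ends G e" unfolding EC_def by blast
  have "p \<in> insert a (insert b C')" using EC_ends[OF h(2) e(2)] p by blast
  moreover have "p \<noteq> a" "p \<noteq> b" using ab_notin h(1) p by auto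
  ultimately have "p \<in> C'" by blast
  then show False using cps_disj h p by blast
qed

lemma EC_E12: "C \<in> cps \<Longrightarrow> EC G C \<inter> E12 G a b = {}"
  unfolding EC_def E12_def using ab_notin by fastforce

lemma edges_decomp: "edges G = E12 G a b \<union> \<Union>(EC G ` cps)"
proof
  show "E12 G a b \<union> \<Union>(EC G ` cps) \<subseteq> edges G" by (auto simp: E12_def EC_def)
  show "edges G \<subseteq> E12 G a b \<union> \<Union>(EC G ` cps)"
  proof
    fix e assume e: "e \<in> edges G"
    show "e \<in> E12 G a b \<union> \<Union>(EC G ` cps)"
    proof (cases "ends G e \<inter> R = {}")
      case True
      then have "ends G e \<subseteq> {a,b}" using ends_sub[OF e] by (auto simp: Rs_def)
      moreover have "card (ends G e) = 2" using card_ends e by blast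
      ultimately have "ends G e = {a,b}"
        using card_subset_eq[of "{a,b}" "ends G e"] ab by simp
      then show ?thesis using e by (simp add: E12_def)
    next
      case False
      then obtain p where p: "p \<in> ends G e" "p \<in> R" by blast
      then have "cmp G a b p \<in> cps" by (simp add: comps_def)
      moreover have "e \<in> EC G (cmp G a b p)" using e p comp_self unfolding EC_def by blast
      ultimately show ?thesis by blast
    qed
  qed
qed

lemma verts_decomp: "verts G = {a,b} \<union> \<Union>cps"
  using cps_Un av bv by (auto simp: Rs_def)

lemma eR_inC: "C \<in> cps \<Longrightarrow> B \<inter> C \<subseteq> B' \<Longrightarrow> eR G (edges G) (B \<inter> C) \<subseteq> eR G (EC G C) B'"
  unfolding eR_def EC_def using ends_ne by fastforce

lemma reachS:
  assumes C: "C \<in> cps" and x: "x \<in> C" and v: "v \<noteq> x"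
  shows "\<exists>s. s \<in> {a,b} \<and> s \<noteq> v \<and> (x,s) \<in> (eR G (EC G C) (insert a (insert b C) - {v}))\<^sup>*"
proof -
  define s0 where "s0 = (if v = a then b else a)"
  have s0: "s0 \<in> verts G" "s0 \<noteq> v" "s0 \<notin> C" using av bv ab ab_notin[OF C] by (auto simp: s0_def)
  have xv: "x \<in> verts G" using x cps_sub[OF C] R_sub by blast
  have "(x,s0) \<in> (eR G (edges G) (-{v}))\<^sup>*" using s0 xv v by (intro conn_del) auto
  from exit[OF this x s0(3)] obtain x' z e where
    E: "(x,x') \<in> (eR G (edges G) (-{v} \<inter> C))\<^sup>*" "x' \<in> C" "z \<notin> C" "e \<in> edges G"
       "ends G e \<subseteq> -{v}" "x' \<in> ends G e" "z \<in> ends G e" by blast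
  have zv: "z \<in> verts G" using ends_sub E by blast
  have zS: "z \<in> {a,b}"
  proof (rule ccontr)
    assume "z \<notin> {a,b}"
    then have "z \<in> R" using zv by (simp add: Rs_def)
    then have "z \<in> C" using adj_R[OF C E(2) E(4) E(6) E(7)] by blast
    then show False using E by blast
  qed
  have zneq: "z \<noteq> v" using E by blast
  let ?B = "insert a (insert b C) - {v}"
  have "-{v} \<inter> C \<subseteq> ?B" by blast
  then have "eR G (edges G) (-{v} \<inter> C) \<subseteq> eR G (EC G C) ?B" by (rule eR_inC[OF C])
  then have "(x,x') \<in> (eR G (EC G C) ?B)\<^sup>*" using subsetD[OF rtrancl_mono E(1)] by blast
  moreover have "e \<in> EC G C" using E unfolding EC_def by blast
  moreover have "ends G e \<subseteq> ?B" using EC_ends[OF C \<open>e \<in> EC G C\<close>] E(5) by blast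
  moreover have "(x',z) \<in> eR G (EC G C) ?B"
    using \<open>e \<in> EC G C\<close> \<open>ends G e \<subseteq> ?B\<close> E(6,7) unfolding eR_def by blast
  ultimately have "(x,z) \<in> (eR G (EC G C) ?B)\<^sup>*" by (meson rtrancl.rtrancl_into_rtrancl)
  then show ?thesis using zS zneq by blast
qed

lemma attach:
  assumes C: "C \<in> cps" and s: "s \<in> {a,b}"
  shows "\<exists>e\<in>EC G C. s \<in> ends G e"
proof -
  obtain x where x: "x \<in> C" using cps_ne[OF C] by blast
  define v where "v = (if s = a then b else a)"
  have "v \<noteq> x" using ab_notin[OF C] x by (auto simp: v_def)
  from reachS[OF C x this] obtain t where t: "t \<in> {a,b}" "t \<noteq> v"
    "(x,t) \<in> (eR G (EC G C) (insert a (insert b C) - {v}))\<^sup>*" by blast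
  have "t = s" using t s ab by (auto simp: v_def)
  have "x \<noteq> t" using x t ab_notin[OF C] by blast
  then obtain y where "(y,t) \<in> eR G (EC G C) (insert a (insert b C) - {v})"
    using t(3) by (metis rtranclE)
  then show ?thesis using \<open>t = s\<close> unfolding eR_def by blast
qed

lemma EC_card: "C \<in> cps \<Longrightarrow> card (EC G C) \<ge> 2"
proof -
  assume C: "C \<in> cps"
  obtain e1 where e1: "e1 \<in> EC G C" "a \<in> ends G e1" using attach[OF C] by blast
  obtain e2 where e2: "e2 \<in> EC G C" "b \<in> ends G e2" using attach[OF C] by blast
  have "e1 \<noteq> e2"
  proof
    assume "e1 = e2"
    obtain p where "p \<in> C" "p \<in> ends G e1" using e1 unfolding EC_def by blast
    then have "ends G e1 = {a,p}" using ends_pair e1 ab_notin[OF C] unfolding EC_def by blast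
    then show False using e2 \<open>e1 = e2\<close> ab ab_notin[OF C] \<open>p \<in> C\<close> by auto
  qed
  moreover have "finite (EC G C)" using finE unfolding EC_def by simp
  ultimately have "card {e1,e2} \<le> card (EC G C)" using e1 e2 by (intro card_mono) auto
  then show ?thesis using \<open>e1 \<noteq> e2\<close> by simp
qed


end

context twoc begin
abbreviation "H \<equiv> identify G a b"
abbreviation "g \<equiv> (\<lambda>x. if x = b then a else x)"

lemma ends_H: "ends H e = g ` ends G e" by (simp add: identify_def)
lemma verts_H: "verts H = verts G - {b}" by (simp add: identify_def)
lemma edges_H: "edges H = edges G" by (simp add: identify_def)

lemma card_two: "x \<noteq> y \<Longrightarrow> card {x,y} = 2" by simp

lemma gimg: "b \<notin> X \<Longrightarrow> g ` X = X" by auto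

lemma eR_Q: "eR (Q G a b C) E A = eR H E A" by (simp add: Q_def eR_def)

lemma rtr_map: "(x,y) \<in> r\<^sup>* \<Longrightarrow> (\<And>p q. (p,q) \<in> r \<Longrightarrow> (f p, f q) \<in> s) \<Longrightarrow> (f x, f y) \<in> s\<^sup>*"
proof (induction rule: rtrancl_induct)
  case (step y z) then show ?case by (meson rtrancl.rtrancl_into_rtrancl)
qed simp

lemma Q_reach:
  assumes C: "C \<in> cps" and v: "v \<noteq> a" and x: "x \<in> C" "x \<noteq> v"
  shows "(x,a) \<in> (eR H (EC G C) (-{v}))\<^sup>*"
proof -
  from reachS[OF C x(1)] x(2) obtain s where s: "s \<in> {a,b}" "s \<noteq> v"
     "(x,s) \<in> (eR G (EC G C) (insert a (insert b C) - {v}))\<^sup>*" by metis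
  have "(g x, g s) \<in> (eR H (EC G C) (-{v}))\<^sup>*"
  proof (rule rtr_map[OF s(3)])
    fix p q assume "(p,q) \<in> eR G (EC G C) (insert a (insert b C) - {v})"
    then obtain e where e: "e \<in> EC G C" "ends G e \<subseteq> insert a (insert b C) - {v}" "p \<in> ends G e" "q \<in> ends G e"
      unfolding eR_def by blast
    have "ends H e \<subseteq> -{v}" using e(2) v unfolding ends_H by auto
    moreover have "g p \<in> ends H e" "g q \<in> ends H e" using e(3,4) unfolding ends_H by auto
    ultimately show "(g p, g q) \<in> eR H (EC G C) (-{v})" unfolding eR_def using e(1) by blast
  qed
  moreover have "g x = x" using x ab_notin[OF C] by auto
  moreover have "g s = a" using s by auto
  ultimately show ?thesis by simp
qed

lemma Q_card: "C \<in> cps \<Longrightarrow> e \<in> EC G C \<Longrightarrow> card (ends H e) = 2"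
proof -
  assume C: "C \<in> cps" and e: "e \<in> EC G C"
  then obtain p where p: "p \<in> C" "p \<in> ends G e" "e \<in> edges G" unfolding EC_def by blast
  obtain p' q' where pq: "p' \<noteq> q'" "ends G e = {p',q'}" using ends2[OF p(3)] by blast
  then have "\<exists>q. q \<noteq> p \<and> ends G e = {p,q}" using p(2) by auto
  then obtain q where q: "q \<noteq> p" "ends G e = {p,q}" by blast
  have "g p = p" using p ab_notin[OF C] by auto
  moreover have "g q \<noteq> p" using q p ab_notin[OF C] by auto
  ultimately have ne: "g p \<noteq> g q" by simp
  have E: "ends H e = {g p, g q}" by (simp only: ends_H q(2) image_insert image_empty)
  show ?thesis unfolding E by (rule card_two[OF ne])
qed

lemma Q_ns: assumes C: "C \<in> cps" shows "nonseparable (Q G a b C)"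
proof -
  have vQ: "verts (Q G a b C) = insert a C" and eQ: "edges (Q G a b C) = EC G C"
    and enQ: "ends (Q G a b C) = ends H" by (simp_all add: Q_def)
  have toa: "(x,a) \<in> (eR H (EC G C) UNIV)\<^sup>*" if "x \<in> insert a C" for x
  proof (cases "x = a")
    case False
    then have "x \<in> C" "x \<noteq> b" using that ab_notin[OF C] by auto
    then have "(x,a) \<in> (eR H (EC G C) (-{b}))\<^sup>*" using Q_reach[OF C] ab by metis
    then show ?thesis by (rule eR_rtr_mono) auto
  qed simp
  have cc: "\<And>x y. x \<in> insert a C \<Longrightarrow> y \<in> insert a C \<Longrightarrow> (x,y) \<in> (eR H (EC G C) UNIV)\<^sup>*"
    by (rule conn_from_target[OF toa])
  have con: "connected_graph (Q G a b C)"
    unfolding connected_graph_def edge_rel_eR vQ eQ eR_Q using cc by simp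
  have ncut: "\<not> cut_vertex (Q G a b C) v" for v
  proof (rule cut_vertexI_conn, unfold vQ eQ eR_Q)
    fix x y assume xy: "x \<in> insert a C - {v}" "y \<in> insert a C - {v}"
    show "(x,y) \<in> (eR H (EC G C) (-{v}))\<^sup>*"
    proof (cases "v = a")
      case True
      then have "x \<in> C" "y \<in> C" using xy by auto
      then have "y \<in> cmp G a b x" using cps_comp[OF C] by blast
      then have P: "(x,y) \<in> (eR G (edges G) R)\<^sup>*" by (simp add: cmp_def)
      have St: "\<And>u w. (u,w) \<in> eR G (edges G) R \<Longrightarrow> u \<in> C \<Longrightarrow> w \<in> C \<and> (u,w) \<in> eR H (EC G C) (-{v})"
      proof -
        fix u w assume uw: "(u,w) \<in> eR G (edges G) R" "u \<in> C"
        then obtain e where e: "e \<in> edges G" "ends G e \<subseteq> R" "u \<in> ends G e" "w \<in> ends G e"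
          unfolding eR_def by blast
        have "w \<in> C" using adj_R[OF C uw(2) e(1) e(3) e(4)] e by blast
        moreover have "e \<in> EC G C" using e uw unfolding EC_def by blast
        moreover have "ends H e = ends G e" unfolding ends_H using e(2) by (intro gimg) (auto simp: Rs_def)
        moreover have "ends G e \<subseteq> -{v}" using e(2) True by (auto simp: Rs_def)
        ultimately show "w \<in> C \<and> (u,w) \<in> eR H (EC G C) (-{v})" unfolding eR_def using e by auto
      qed
      have "(x,y) \<in> (eR H (EC G C) (-{v}))\<^sup>* \<and> y \<in> C"
        by (rule rtrancl_closed_sub[OF P \<open>x \<in> C\<close> St])
      then show ?thesis by simp
    next
      case False
      have "(z,a) \<in> (eR H (EC G C) (-{v}))\<^sup>*" if "z \<in> insert a C - {v}" for z
      proof (cases "z = a")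
        case False
        then show ?thesis using that Q_reach[OF C \<open>v \<noteq> a\<close>] by blast
      qed simp
      then show ?thesis by (rule conn_from_target[OF _ xy])
    qed
  qed
  have nl: "\<forall>e\<in>edges (Q G a b C). \<not> is_loop (Q G a b C) e"
    unfolding eQ is_loop_def enQ using Q_card[OF C] by simp
  show ?thesis unfolding nonseparable_def using con ncut nl by blast
qed


lemma subH: "subgraph K H \<Longrightarrow> verts K \<subseteq> verts G - {b} \<and> edges K \<subseteq> edges G \<and> ends K = ends H \<and>
   (\<forall>e\<in>edges K. ends H e \<subseteq> verts K)"
  unfolding subgraph_def by (simp add: identify_def)

lemma ends_H_ne: "e \<in> edges G \<Longrightarrow> ends H e \<noteq> {}"
  unfolding ends_H using ends_ne by blast

lemma fin_ends_H: "e \<in> edges G \<Longrightarrow> finite (ends H e)"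
  unfolding ends_H using card_ends by (metis card.infinite finite_imageI zero_neq_numeral)

lemma nonloop_other: "e \<in> edges G \<Longrightarrow> card (ends H e) \<noteq> 1 \<Longrightarrow> \<exists>y\<in>ends H e. y \<noteq> a"
proof (rule ccontr)
  assume h: "e \<in> edges G" "card (ends H e) \<noteq> 1" "\<not> (\<exists>y\<in>ends H e. y \<noteq> a)"
  then have "ends H e \<subseteq> {a}" by (simp only: subset_eq Ball_def) blast
  then have "ends H e = {a}" using ends_H_ne[OF h(1)] by (simp only: subset_singleton_iff) blast
  then show False using h(2) by simp
qed

lemma loopfree:
  assumes K: "subgraph K H" "nonseparable K" and e: "e \<in> edges K" "\<not> is_loop K e"
  shows "\<forall>e'\<in>edges K. \<not> is_loop K e'"
proof (rule ccontr)
  assume "\<not> (\<forall>e'\<in>edges K. \<not> is_loop K e')"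
  then have c1: "card (verts K) = 1" using K(2) unfolding nonseparable_def by blast
  have S: "verts K \<subseteq> verts G - {b}" "edges K \<subseteq> edges G" "ends K = ends H" "ends H e \<subseteq> verts K"
    using subH[OF K(1)] e by auto
  have fK: "finite (verts K)" using S(1) finV finite_subset by blast
  have eG: "e \<in> edges G" using S e by blast
  have "card (ends H e) \<noteq> 1" using e(2) S(3) unfolding is_loop_def by simp
  moreover have "card (ends H e) \<noteq> 0" using ends_H_ne[OF eG] fin_ends_H[OF eG] by simp
  moreover have "card (ends H e) \<le> 1" using card_mono[OF fK S(4)] c1 by simp
  ultimately show False by linarith
qed

lemma contain:
  assumes C: "C \<in> cps" and K: "subgraph K H" "nonseparable K" "\<forall>e\<in>edges K. \<not> is_loop K e"
    and c: "c \<in> C" "c \<in> verts K"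
  shows "subgraph K (Q G a b C)"
proof -
  have S: "verts K \<subseteq> verts G - {b}" "edges K \<subseteq> edges G" "ends K = ends H" "\<forall>e\<in>edges K. ends H e \<subseteq> verts K"
    using subH[OF K(1)] by auto
  have VK: "verts K \<subseteq> insert a C"
  proof
    fix z assume z: "z \<in> verts K"
    show "z \<in> insert a C"
    proof (rule ccontr)
      assume nz: "z \<notin> insert a C"
      have zR: "z \<in> R" using z nz S(1) by (auto simp: Rs_def)
      have ca: "c \<noteq> a" using c ab_notin[OF C] by blast
      have "(c,z) \<in> (edge_rel K)\<^sup>*" using K(2) c z unfolding nonseparable_def connected_graph_def by blast
      then have cz0: "(c,z) \<in> (eR K (edges K) UNIV)\<^sup>*" by (simp add: edge_rel_eR)
      have cz1: "(c,z) \<in> (eR K (edges K) (-{a}))\<^sup>*"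
      proof (cases "a \<in> verts K")
        case True
        have "\<not> cut_vertex K a" using K(2) unfolding nonseparable_def by blast
        then have "(c,z) \<in> (edge_rel (delete_vertex K a))\<^sup>*"
          using True c z ca nz \<open>(c,z) \<in> (edge_rel K)\<^sup>*\<close> unfolding cut_vertex_def by blast
        then show ?thesis by (simp add: edge_rel_del_eR)
      next
        case False
        have "eR K (edges K) UNIV = eR K (edges K) (-{a})"
          using S(3,4) False by (intro eR_ends_univ) auto
        then show ?thesis using cz0 by simp
      qed
      have "eR K (edges K) (-{a}) \<subseteq> eR G (edges G) R"
      proof
        fix p
        assume "p \<in> eR K (edges K) (-{a})"
        then obtain x y e where e: "p = (x,y)" "e \<in> edges K" "ends H e \<subseteq> -{a}" "x \<in> ends H e" "y \<in> ends H e"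
          unfolding eR_def S(3) by blast
        have eG: "e \<in> edges G" using e S by blast
        have nb: "b \<notin> ends G e" using e(3) unfolding ends_H by auto
        have na: "a \<notin> ends G e" using e(3) unfolding ends_H by auto
        have eq: "ends H e = ends G e" unfolding ends_H using nb by (rule gimg)
        have "ends G e \<subseteq> R" using na nb ends_sub[OF eG] by (auto simp: Rs_def)
        then show "p \<in> eR G (edges G) R" unfolding eR_def using e eq eG by auto
      qed
      then have "(c,z) \<in> (eR G (edges G) R)\<^sup>*" using subsetD[OF rtrancl_mono cz1] by blast
      then have "z \<in> cmp G a b c" by (simp add: cmp_def)
      then have "z \<in> C" using cps_comp[OF C c(1)] by simp
      then show False using nz by blast
    qed
  qed
  have EK: "edges K \<subseteq> EC G C"
  proof
    fix e assume e: "e \<in> edges K"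
    have eG: "e \<in> edges G" using e S by blast
    have "card (ends H e) \<noteq> 1" using K(3) e S(3) unfolding is_loop_def by simp
    then obtain y where y: "y \<in> ends H e" "y \<noteq> a" using nonloop_other[OF eG] by blast
    have "y \<in> C" using y VK S(4) e by blast
    obtain p where p: "p \<in> ends G e" "y = g p" using y(1) unfolding ends_H by blast
    have "p \<noteq> b" using p y by auto
    then have "p \<in> C" using p \<open>y \<in> C\<close> by simp
    then show "e \<in> EC G C" unfolding EC_def using eG p by blast
  qed
  show ?thesis unfolding subgraph_def using VK EK S by (simp add: Q_def)
qed

lemma Q_sub: assumes C: "C \<in> cps" shows "subgraph (Q G a b C) H"
proof -
  have "insert a C \<subseteq> verts G - {b}" using av ab cps_sub[OF C] R_sub ab_notin[OF C] by auto
  moreover have "EC G C \<subseteq> edges G" by (auto simp: EC_def)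
  moreover have "\<forall>e\<in>EC G C. ends H e \<subseteq> insert a C"
  proof
    fix e assume "e \<in> EC G C"
    then have "ends G e \<subseteq> insert a (insert b C)" by (rule EC_ends[OF C])
    then show "ends H e \<subseteq> insert a C" unfolding ends_H by auto
  qed
  ultimately show ?thesis unfolding subgraph_def by (simp add: Q_def identify_def)
qed

lemma EC_ne: "C \<in> cps \<Longrightarrow> EC G C \<noteq> {}"
  using EC_card by fastforce

lemma Q_block: assumes C: "C \<in> cps" shows "Q G a b C \<in> blocks H"
proof -
  have "K = Q G a b C" if K: "subgraph K H" "nonseparable K" "subgraph (Q G a b C) K" for K
  proof -
    obtain e0 where e0: "e0 \<in> EC G C" using EC_ne[OF C] by blast
    have SQ: "verts (Q G a b C) \<subseteq> verts K" "edges (Q G a b C) \<subseteq> edges K" "ends K = ends H"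
      using K(3) subH[OF K(1)] unfolding subgraph_def by auto
    have e0K: "e0 \<in> edges K" using e0 SQ by (auto simp: Q_def)
    have "\<not> is_loop K e0" using Q_card[OF C e0] SQ(3) unfolding is_loop_def by simp
    then have lf: "\<forall>e\<in>edges K. \<not> is_loop K e" using loopfree[OF K(1,2) e0K] by blast
    obtain c where c: "c \<in> C" using cps_ne[OF C] by blast
    have "c \<in> verts K" using c SQ by (auto simp: Q_def)
    then have "subgraph K (Q G a b C)" using contain[OF C K(1,2) lf c] by blast
    then show ?thesis using K(3) subgraph_antisym by blast
  qed
  then show ?thesis unfolding blocks_def using Q_sub[OF C] Q_ns[OF C] by blast
qed

lemma E12_H: "e \<in> E12 G a b \<Longrightarrow> ends H e = {a}"
  unfolding E12_def ends_H by auto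

lemma L_ns: "nonseparable (Lg G a b e)"
proof -
  have "connected_graph (Lg G a b e)" by (simp add: connected_graph_def Lg_def)
  moreover have "\<not> cut_vertex (Lg G a b e) v" for v by (simp add: cut_vertex_def Lg_def)
  ultimately show ?thesis unfolding nonseparable_def by (simp add: Lg_def)
qed

lemma L_block: assumes e: "e \<in> E12 G a b" shows "Lg G a b e \<in> blocks H"
proof -
  have eG: "e \<in> edges G" using e by (simp add: E12_def)
  have sub: "subgraph (Lg G a b e) H"
    unfolding subgraph_def using E12_H[OF e] av ab eG by (simp add: Lg_def identify_def)
  have "K = Lg G a b e" if K: "subgraph K H" "nonseparable K" "subgraph (Lg G a b e) K" for K
  proof -
    have SQ: "a \<in> verts K" "e \<in> edges K" "ends K = ends H"
      using K(3) subH[OF K(1)] unfolding subgraph_def by (auto simp: Lg_def)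
    have "is_loop K e" unfolding is_loop_def SQ(3) E12_H[OF e] by simp
    then have c: "card (verts K) = 1" "card (edges K) = 1" using K(2) SQ(2) unfolding nonseparable_def by blast+
    have "verts K = {a}" using c(1) SQ(1) by (metis card_1_singletonE singletonD)
    moreover have "edges K = {e}" using c(2) SQ(2) by (metis card_1_singletonE singletonD)
    ultimately show ?thesis using SQ(3) by (intro mgraph.equality) (simp_all add: Lg_def)
  qed
  then show ?thesis unfolding blocks_def using sub L_ns by blast
qed


lemma blocks_char: "{B \<in> blocks H. edges B \<noteq> {}} = Q G a b ` cps \<union> Lg G a b ` E12 G a b"
proof
  show "Q G a b ` cps \<union> Lg G a b ` E12 G a b \<subseteq> {B \<in> blocks H. edges B \<noteq> {}}"
    using Q_block L_block EC_ne by (auto simp: Q_def Lg_def)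
  show "{B \<in> blocks H. edges B \<noteq> {}} \<subseteq> Q G a b ` cps \<union> Lg G a b ` E12 G a b"
  proof
    fix B assume "B \<in> {B \<in> blocks H. edges B \<noteq> {}}"
    then have B: "subgraph B H" "nonseparable B"
      "\<And>K. subgraph K H \<Longrightarrow> nonseparable K \<Longrightarrow> subgraph B K \<Longrightarrow> K = B" "edges B \<noteq> {}"
      unfolding blocks_def by blast+
    obtain e0 where e0: "e0 \<in> edges B" using B(4) by blast
    have S: "verts B \<subseteq> verts G - {b}" "edges B \<subseteq> edges G" "ends B = ends H" "\<forall>e\<in>edges B. ends H e \<subseteq> verts B"
      using subH[OF B(1)] by auto
    have eG: "e0 \<in> edges G" using e0 S by blast
    show "B \<in> Q G a b ` cps \<union> Lg G a b ` E12 G a b"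
    proof (cases "is_loop B e0")
      case True
      then have c1: "card (ends H e0) = 1" using S(3) by (simp add: is_loop_def)
      obtain p q where pq: "p \<noteq> q" "ends G e0 = {p,q}" using ends2[OF eG] by blast
      have "g p = g q"
      proof (rule ccontr)
        assume ne: "g p \<noteq> g q"
        have E: "ends H e0 = {g p, g q}" by (simp only: ends_H pq(2) image_insert image_empty)
        have "card (ends H e0) = 2" unfolding E by (rule card_two[OF ne])
        then show False using c1 by simp
      qed
      then have "{p,q} = {a,b}" using pq(1) by (auto split: if_splits)
      then have eE: "e0 \<in> E12 G a b" using eG pq by (simp add: E12_def)
      have c: "card (verts B) = 1" "card (edges B) = 1" using B(2) True e0 unfolding nonseparable_def by blast+
      have "a \<in> verts B" using S(4) e0 E12_H[OF eE] by blast
      then have "verts B = {a}" using c(1) by (metis card_1_singletonE singletonD)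
      moreover have "edges B = {e0}" using c(2) e0 by (metis card_1_singletonE singletonD)
      ultimately have "B = Lg G a b e0" using S(3) by (intro mgraph.equality) (simp_all add: Lg_def)
      then show ?thesis using eE by blast
    next
      case False
      have lf: "\<forall>e\<in>edges B. \<not> is_loop B e" using loopfree[OF B(1,2) e0 False] .
      have "card (ends H e0) \<noteq> 1" using False S(3) by (simp add: is_loop_def)
      then obtain y where y: "y \<in> ends H e0" "y \<noteq> a" using nonloop_other[OF eG] by blast
      have yB: "y \<in> verts B" using y S(4) e0 by blast
      then have yR: "y \<in> R" using y S(1) by (auto simp: Rs_def)
      define C where "C = cmp G a b y"
      have C: "C \<in> cps" using yR by (simp add: C_def comps_def)
      have yC: "y \<in> C" by (simp add: C_def comp_self)
      have "subgraph B (Q G a b C)" by (rule contain[OF C B(1,2) lf yC yB])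
      then have "Q G a b C = B" using B(3)[OF Q_sub[OF C] Q_ns[OF C]] by blast
      then show ?thesis using C by blast
    qed
  qed
qed

lemma fin_E12: "finite (E12 G a b)" using finE by (simp add: E12_def)

lemma nblocks_H: "nblocks H = card cps + card (E12 G a b)"
proof -
  have i1: "inj_on (Q G a b) cps"
  proof
    fix C C' assume h: "C \<in> cps" "C' \<in> cps" "Q G a b C = Q G a b C'"
    then have "insert a C = insert a C'" by (metis Q_def mgraph.select_convs(1))
    then show "C = C'" using ab_notin h by (metis insert_ident)
  qed
  have i2: "inj_on (Lg G a b) (E12 G a b)"
    by (rule inj_onI) (metis Lg_def mgraph.select_convs(2) singleton_inject)
  have d: "Q G a b ` cps \<inter> Lg G a b ` E12 G a b = {}"
  proof (rule ccontr)
    assume "Q G a b ` cps \<inter> Lg G a b ` E12 G a b \<noteq> {}"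
    then obtain C e where h: "C \<in> cps" "Q G a b C = Lg G a b e" by blast
    then have "insert a C = {a}" by (metis Q_def Lg_def mgraph.select_convs(1))
    then show False using cps_ne[OF h(1)] ab_notin[OF h(1)] by blast
  qed
  have "nblocks H = card (Q G a b ` cps \<union> Lg G a b ` E12 G a b)"
    unfolding nblocks_def blocks_char ..
  also have "\<dots> = card (Q G a b ` cps) + card (Lg G a b ` E12 G a b)"
    using d fin_cps fin_E12 by (intro card_Un_disjoint) auto
  also have "\<dots> = card cps + card (E12 G a b)" using card_image i1 i2 by metis
  finally show ?thesis .
qed

end


definition U :: "('v,'e) mgraph \<Rightarrow> 'v \<Rightarrow> 'v \<Rightarrow> 'v set set \<Rightarrow> 'e set \<Rightarrow> ('v,'e) mgraph" where
  "U G a b X F = \<lparr>verts = {a,b} \<union> \<Union>X, edges = F \<union> \<Union>(EC G ` X), ends = ends G\<rparr>"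

context twoc begin

lemma U_simps: "verts (U G a b X F) = {a,b} \<union> \<Union>X" "edges (U G a b X F) = F \<union> \<Union>(EC G ` X)"
  "ends (U G a b X F) = ends G" by (simp_all add: U_def)

lemma U_sub: assumes "X \<subseteq> cps" "F \<subseteq> E12 G a b" shows "subgraph (U G a b X F) G \<and> subg_ok (U G a b X F)"
proof -
  have "ends G e \<subseteq> {a,b} \<union> \<Union>X" if e: "e \<in> F \<union> \<Union>(EC G ` X)" for e
  proof (cases "e \<in> F")
    case True then show ?thesis using assms by (auto simp: E12_def)
  next
    case False
    then obtain C where "C \<in> X" "e \<in> EC G C" using e by blast
    then show ?thesis using EC_ends[of C e] assms by blast
  qed
  moreover have "{a,b} \<union> \<Union>X \<subseteq> verts G" using av bv assms(1) cps_sub R_sub by blast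
  moreover have "F \<union> \<Union>(EC G ` X) \<subseteq> edges G" using assms(2) by (auto simp: EC_def E12_def)
  ultimately show ?thesis unfolding subgraph_def subg_ok_def U_simps by blast
qed

lemma U_ab:
  assumes X: "X \<subseteq> cps" and F: "F \<subseteq> E12 G a b" and A: "{a,b} \<subseteq> A"
    and P: "F \<noteq> {} \<or> (\<exists>C\<in>X. C \<subseteq> A)"
  shows "(a,b) \<in> (eR G (edges (U G a b X F)) A)\<^sup>*"
proof (cases "F \<noteq> {}")
  case True
  then obtain f where f: "f \<in> F" by blast
  then have "ends G f = {a,b}" using F by (auto simp: E12_def)
  then have "(a,b) \<in> eR G (edges (U G a b X F)) A" unfolding eR_def U_simps using f A by blast
  then show ?thesis by blast
next
  case False
  then obtain C where C: "C \<in> X" "C \<subseteq> A" using P by blast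
  have Cc: "C \<in> cps" using C X by blast
  obtain x where x: "x \<in> C" using cps_ne[OF Cc] by blast
  have sub: "EC G C \<subseteq> edges (U G a b X F)" using C by (auto simp: U_simps)
  have toS: "(x,s) \<in> (eR G (edges (U G a b X F)) A)\<^sup>*" if s: "s \<in> {a,b}" for s
  proof -
    define v where "v = (if s = a then b else a)"
    have "v \<noteq> x" using ab_notin[OF Cc] x by (auto simp: v_def)
    from reachS[OF Cc x this] obtain t where t: "t \<in> {a,b}" "t \<noteq> v"
      "(x,t) \<in> (eR G (EC G C) (insert a (insert b C) - {v}))\<^sup>*" by blast
    have "t = s" using t s ab by (auto simp: v_def)
    have AA: "insert a (insert b C) - {v} \<subseteq> A" using A C by blast
    show ?thesis by (rule eR_rtr_mono[OF t(3)[unfolded \<open>t = s\<close>] sub AA])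
  qed
  have "(x,a) \<in> (eR G (edges (U G a b X F)) A)\<^sup>*" using toS by simp
  then have "(a,x) \<in> (eR G (edges (U G a b X F)) A)\<^sup>*" by (rule eR_sym)
  moreover have "(x,b) \<in> (eR G (edges (U G a b X F)) A)\<^sup>*" using toS by simp
  ultimately show ?thesis by (rule rtrancl_trans)
qed

lemma U_reach:
  assumes X: "X \<subseteq> cps" and C: "C \<in> X" and x: "x \<in> C" and v: "v \<noteq> x"
  shows "\<exists>s. s \<in> {a,b} \<and> s \<noteq> v \<and> (x,s) \<in> (eR G (edges (U G a b X F)) (-{v}))\<^sup>*"
proof -
  from reachS[OF subsetD[OF X C] x v] obtain s where s: "s \<in> {a,b}" "s \<noteq> v"
    "(x,s) \<in> (eR G (EC G C) (insert a (insert b C) - {v}))\<^sup>*" by blast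
  have "EC G C \<subseteq> edges (U G a b X F)" using C by (auto simp: U_simps)
  moreover have "insert a (insert b C) - {v} \<subseteq> -{v}" by blast
  ultimately have "(x,s) \<in> (eR G (edges (U G a b X F)) (-{v}))\<^sup>*"
    by (rule eR_rtr_mono[OF s(3)])
  then show ?thesis using s by blast
qed


lemma eR_U: "eR (U G a b X F) E A = eR G E A" by (simp add: U_def eR_def)

lemma U_ns:
  assumes X: "X \<subseteq> cps" and F: "F \<subseteq> E12 G a b" and c2: "2 \<le> card X + card F"
  shows "nonseparable (U G a b X F)"
proof -
  let ?E = "edges (U G a b X F)"
  let ?V = "verts (U G a b X F)"
  have finX: "finite X" using X fin_cps finite_subset by blast
  have finF: "finite F" using F fin_E12 finite_subset by blast
  have pv: "F \<noteq> {} \<or> (\<exists>C\<in>X. C \<subseteq> -{v})" for v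
  proof (cases "F = {}")
    case True
    then have "card X \<ge> 2" using c2 by simp
    then obtain C1 C2 where C12: "C1 \<in> X" "C2 \<in> X" "C1 \<noteq> C2"
      by (metis One_nat_def card.empty card_le_Suc0_iff_eq finX not_less_eq_eq numeral_2_eq_2 zero_le)
    have "v \<notin> C1 \<or> v \<notin> C2" using cps_disj C12 X by blast
    then show ?thesis using C12 by blast
  qed simp
  have pU: "F \<noteq> {} \<or> (\<exists>C\<in>X. C \<subseteq> UNIV)"
  proof (cases "F = {}")
    case True
    then have "card X \<noteq> 0" using c2 by simp
    then have "X \<noteq> {}" by auto
    then show ?thesis by blast
  qed simp
  have abU: "(a,b) \<in> (eR G ?E UNIV)\<^sup>*" by (rule U_ab[OF X F _ pU]) simp
  have abv: "(a,b) \<in> (eR G ?E (-{v}))\<^sup>*" if "v \<notin> {a,b}" for v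
    by (rule U_ab[OF X F _ pv]) (use that in blast)
  have toa: "(x,a) \<in> (eR G ?E UNIV)\<^sup>*" if x: "x \<in> ?V" for x
  proof -
    consider "x = a" | "x = b" | C where "C \<in> X" "x \<in> C" using x unfolding U_simps by blast
    then show ?thesis
    proof cases
      case 2 then show ?thesis using eR_sym[OF abU] by simp
    next
      case 3
      have "b \<noteq> x" using 3 X ab_notin by blast
      from U_reach[OF X 3 this, of F] obtain s where s: "s \<in> {a,b}" "s \<noteq> b"
        "(x,s) \<in> (eR G ?E (-{b}))\<^sup>*" by blast
      then have "(x,a) \<in> (eR G ?E (-{b}))\<^sup>*" by auto
      then show ?thesis by (rule eR_rtr_mono) auto
    qed simp
  qed
  have cc: "\<And>x y. x \<in> ?V \<Longrightarrow> y \<in> ?V \<Longrightarrow> (x,y) \<in> (eR G ?E UNIV)\<^sup>*"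
    by (rule conn_from_target[OF toa])
  have con: "connected_graph (U G a b X F)"
    unfolding connected_graph_def edge_rel_eR eR_U using cc by (auto simp: U_simps)
  have ncut: "\<not> cut_vertex (U G a b X F) v" for v
  proof (rule cut_vertexI_conn, unfold eR_U)
    define t where "t = (if v = a then b else a)"
    have st: "(s,t) \<in> (eR G ?E (-{v}))\<^sup>*" if "s \<in> {a,b}" "s \<noteq> v" for s
    proof (cases "s = t")
      case False
      then have "v \<notin> {a,b}" "s = b" "t = a" using that ab by (auto simp: t_def split: if_splits)
      then show ?thesis using eR_sym[OF abv] by simp
    qed simp
    have tot: "(z,t) \<in> (eR G ?E (-{v}))\<^sup>*" if z: "z \<in> ?V - {v}" for z
    proof -
      consider "z \<in> {a,b}" | C where "C \<in> X" "z \<in> C" using z unfolding U_simps by blast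
      then show ?thesis
      proof cases
        case 1 then show ?thesis using st z by blast
      next
        case 2
        have "v \<noteq> z" using z by blast
        from U_reach[OF X 2 this, of F] obtain s where s: "s \<in> {a,b}" "s \<noteq> v"
          "(z,s) \<in> (eR G ?E (-{v}))\<^sup>*" by blast
        show ?thesis using rtrancl_trans[OF s(3) st[OF s(1,2)]] .
      qed
    qed
    fix x y assume xy: "x \<in> ?V - {v}" "y \<in> ?V - {v}"
    show "(x,y) \<in> (eR G ?E (-{v}))\<^sup>*" using conn_from_target[of "?V - {v}" t G ?E "-{v}", OF tot xy] .
  qed
  have nl: "\<forall>e\<in>?E. \<not> is_loop (U G a b X F) e"
  proof
    fix e assume "e \<in> ?E"
    then have "e \<in> edges G" using U_sub[OF X F] unfolding subgraph_def by blast
    then show "\<not> is_loop (U G a b X F) e" using card_ends by (simp add: is_loop_def U_simps)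
  qed
  show ?thesis unfolding nonseparable_def using con ncut nl by blast
qed


lemma nb_Q: "C \<in> cps \<Longrightarrow> nblocks (Q G a b C) = 1"
proof -
  assume C: "C \<in> cps"
  have "subg_ok (Q G a b C)" using Q_sub[OF C] unfolding subgraph_def subg_ok_def by (simp add: Q_def)
  moreover have "edges (Q G a b C) \<noteq> {}" using EC_ne[OF C] by (simp add: Q_def)
  ultimately show ?thesis using nblocks_one Q_ns[OF C] by blast
qed

lemma edges_U_fin: "X \<subseteq> cps \<Longrightarrow> F \<subseteq> E12 G a b \<Longrightarrow> finite (edges (U G a b X F))"
  using U_sub finE finite_subset unfolding subgraph_def by metis

lemma card_EU: assumes X: "X \<subseteq> cps" and F: "F \<subseteq> E12 G a b" and c: "1 \<le> card X + card F" "2 \<le> card X + card F \<or> X \<noteq> {}"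
  shows "2 \<le> card (edges (U G a b X F))"
proof -
  have fin: "finite (edges (U G a b X F))" by (rule edges_U_fin[OF X F])
  show ?thesis
  proof (cases "X = {}")
    case True
    then have "2 \<le> card F" using c by simp
    moreover have "F \<subseteq> edges (U G a b X F)" by (simp add: U_simps)
    ultimately show ?thesis using card_mono[OF fin] by (meson le_trans)
  next
    case False
    then obtain C where C: "C \<in> X" by blast
    have "EC G C \<subseteq> edges (U G a b X F)" using C by (auto simp: U_simps)
    then show ?thesis using card_mono[OF fin] EC_card C X by (meson le_trans subsetD)
  qed
qed

lemma nb_U: assumes X: "X \<subseteq> cps" and F: "F \<subseteq> E12 G a b" and c2: "2 \<le> card X + card F"
  shows "nblocks (U G a b X F) = 1"
proof -
  have "edges (U G a b X F) \<noteq> {}" using card_EU[OF X F] c2 by fastforce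
  then show ?thesis using nblocks_one U_ns[OF X F c2] U_sub[OF X F] by blast
qed

lemma idU: "C \<in> cps \<Longrightarrow> identify (U G a b {C} {}) a b = Q G a b C"
  using ab_notin ab by (intro mgraph.equality) (auto simp: identify_def Q_def U_def)

lemma dec: assumes X: "X \<subseteq> cps" and F: "F \<subseteq> E12 G a b"
  shows "verts (U G a b X F) \<inter> verts (U G a b (cps - X) (E12 G a b - F)) = {a,b}"
    "verts (U G a b X F) \<union> verts (U G a b (cps - X) (E12 G a b - F)) = verts G"
    "edges (U G a b X F) \<inter> edges (U G a b (cps - X) (E12 G a b - F)) = {}"
    "edges (U G a b X F) \<union> edges (U G a b (cps - X) (E12 G a b - F)) = edges G"
proof -
  have d1: "\<Union>X \<inter> \<Union>(cps - X) = {}" using cps_disj X by blast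
  then show "verts (U G a b X F) \<inter> verts (U G a b (cps - X) (E12 G a b - F)) = {a,b}"
    unfolding U_simps by blast
  show "verts (U G a b X F) \<union> verts (U G a b (cps - X) (E12 G a b - F)) = verts G"
    unfolding U_simps verts_decomp using X by blast
  have d2: "EC G C \<inter> EC G C' = {}" if "C \<in> X" "C' \<in> cps - X" for C C'
    using EC_disj that X by blast
  have d3: "EC G C \<inter> E12 G a b = {}" if "C \<in> cps" for C using EC_E12 that by blast
  show "edges (U G a b X F) \<inter> edges (U G a b (cps - X) (E12 G a b - F)) = {}"
    unfolding U_simps using d2 d3 X F by blast
  show "edges (U G a b X F) \<union> edges (U G a b (cps - X) (E12 G a b - F)) = edges G"
    unfolding U_simps edges_decomp using X F by blast
qed

lemma L_contract:
  assumes e: "e \<in> E12 G a b" and N: "card cps + card (E12 G a b) = 2"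
  shows "nblocks (identify (delete_edge G e) a b) = 1"
proof -
  have eG: "e \<in> edges G" using e by (simp add: E12_def)
  consider "card cps = 1" "card (E12 G a b) = 1" | "card cps = 0" "card (E12 G a b) = 2"
    | "card cps = 2" "card (E12 G a b) = 0" using N by linarith
  then show ?thesis
  proof cases
    case 1
    then obtain C where C: "cps = {C}" by (meson card_1_singletonE)
    have E: "E12 G a b = {e}" using 1(2) e by (metis card_1_singletonE singletonD)
    have Cc: "C \<in> cps" using C by simp
    have "e \<notin> EC G C" using EC_E12[OF Cc] e by blast
    then have ed: "edges G - {e} = EC G C" using edges_decomp C E by auto
    have vd: "verts G - {b} = insert a C" using verts_decomp C ab ab_notin[OF Cc] by auto
    have "identify (delete_edge G e) a b = Q G a b C"
      using ed vd by (intro mgraph.equality) (simp_all add: identify_def Q_def delete_edge_def)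
    then show ?thesis using nb_Q[OF Cc] by simp
  next
    case 2
    then have c0: "cps = {}" using fin_cps by simp
    obtain p q where pq: "E12 G a b = {p,q}" "p \<noteq> q" using 2(2) unfolding card_2_iff by blast
    then have "\<exists>e'. E12 G a b = {e,e'} \<and> e' \<noteq> e" using e by auto
    then obtain e' where e': "E12 G a b = {e,e'}" "e' \<noteq> e" by blast
    have ed: "edges G - {e} = {e'}" using edges_decomp c0 e' by auto
    have vd: "verts G - {b} = {a}" using verts_decomp c0 ab by auto
    have LL: "identify (delete_edge G e) a b = Lg G a b e'"
      using ed vd by (intro mgraph.equality) (simp_all add: identify_def Lg_def delete_edge_def)
    have e'E: "e' \<in> E12 G a b" using e' by simp
    have "subg_ok (Lg G a b e')" using E12_H[OF e'E] by (simp add: subg_ok_def Lg_def)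
    moreover have "edges (Lg G a b e') \<noteq> {}" by (simp add: Lg_def)
    ultimately have "nblocks (Lg G a b e') = 1" using nblocks_one[OF L_ns] by blast
    then show ?thesis using LL by simp
  next
    case 3
    then show ?thesis using e fin_E12 by simp
  qed
qed

end


lemma comps_swap: "comps G b a = comps G a b"
  unfolding comps_def cmp_def Rs_def by (simp add: insert_commute)
lemma E12_swap: "E12 G b a = E12 G a b"
  unfolding E12_def by (simp add: insert_commute)

context twoc begin

lemma swap: "twoc G b a"
  using wf ns av bv ab by (unfold_locales) auto

lemma nb_contract:
  assumes e: "e \<in> E12 G a b" and N: "card cps + card (E12 G a b) = 2"
  shows "nblocks (contract G e) = 1"
proof -
  interpret B: twoc G b a by (rule swap)
  have eG: "e \<in> edges G" and ee: "ends G e = {a,b}" using e by (simp_all add: E12_def)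
  have nl: "\<not> is_loop G e" using card_ends[OF eG] by (simp add: is_loop_def)
  define x where "x = (SOME x. x \<in> ends G e)"
  define y where "y = (SOME y. y \<in> ends G e \<and> y \<noteq> x)"
  have x: "x \<in> {a,b}" unfolding x_def ee by (rule someI[of _ a]) simp
  have "\<exists>y. y \<in> ends G e \<and> y \<noteq> x" using x ab ee by auto
  then have y: "y \<in> ends G e \<and> y \<noteq> x" unfolding y_def by (rule someI_ex)
  have c: "contract G e = identify (delete_edge G e) x y"
    unfolding contract_def using nl by (simp add: x_def y_def Let_def)
  have "(x = a \<and> y = b) \<or> (x = b \<and> y = a)" using x y ee by auto
  then show ?thesis
  proof
    assume "x = a \<and> y = b"
    then show ?thesis using c L_contract[OF e N] by simp
  next
    assume "x = b \<and> y = a"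
    moreover have "nblocks (identify (delete_edge G e) b a) = 1"
      using B.L_contract e N by (simp add: comps_swap E12_swap)
    ultimately show ?thesis using c by simp
  qed
qed


lemma main: assumes P: "Phi G" shows "nblocks H \<in> {1,3}"
proof -
  define N where "N = card cps + card (E12 G a b)"
  have nbH: "nblocks H = N" using nblocks_H N_def by simp
  have hb: "\<And>e. e \<in> edges G \<Longrightarrow> even (nblocks (contract G e))" using P unfolding Phi_def by blast
  have hc: "\<And>G1 G2 u1 u2. subgraph G1 G \<Longrightarrow> subgraph G2 G \<Longrightarrow> 2 \<le> card (edges G1) \<Longrightarrow> 2 \<le> card (edges G2)
     \<Longrightarrow> u1 \<noteq> u2 \<Longrightarrow> verts G1 \<inter> verts G2 = {u1,u2} \<Longrightarrow> verts G1 \<union> verts G2 = verts G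
     \<Longrightarrow> edges G1 \<inter> edges G2 = {} \<Longrightarrow> edges G1 \<union> edges G2 = edges G \<Longrightarrow>
     (even (int (nblocks (identify G1 u1 u2))) \<longleftrightarrow> even (int (nblocks G1) - 1)) \<and>
        (even (int (nblocks G1) - 1) \<longleftrightarrow> even (int (nblocks G2)))"
  proof -
    fix G1 G2 u1 u2
    have "\<forall>G1 G2 u1 u2. subgraph G1 G \<and> subgraph G2 G \<and>
        card (edges G1) \<ge> 2 \<and> card (edges G2) \<ge> 2 \<and> u1 \<noteq> u2 \<and>
        verts G1 \<inter> verts G2 = {u1, u2} \<and> verts G1 \<union> verts G2 = verts G \<and>
        edges G1 \<inter> edges G2 = {} \<and> edges G1 \<union> edges G2 = edges G \<longrightarrow>
        (even (int (nblocks (identify G1 u1 u2))) \<longleftrightarrow> even (int (nblocks G1) - 1)) \<and>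
        (even (int (nblocks G1) - 1) \<longleftrightarrow> even (int (nblocks G2)))" using P unfolding Phi_def by blast
    then show "subgraph G1 G \<Longrightarrow> subgraph G2 G \<Longrightarrow> 2 \<le> card (edges G1) \<Longrightarrow> 2 \<le> card (edges G2)
     \<Longrightarrow> u1 \<noteq> u2 \<Longrightarrow> verts G1 \<inter> verts G2 = {u1,u2} \<Longrightarrow> verts G1 \<union> verts G2 = verts G
     \<Longrightarrow> edges G1 \<inter> edges G2 = {} \<Longrightarrow> edges G1 \<union> edges G2 = edges G \<Longrightarrow>
     (even (int (nblocks (identify G1 u1 u2))) \<longleftrightarrow> even (int (nblocks G1) - 1)) \<and>
        (even (int (nblocks G1) - 1) \<longleftrightarrow> even (int (nblocks G2)))"
      by (elim allE[of _ G1] allE[of _ G2] allE[of _ u1] allE[of _ u2]) (simp only: simp_thms)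
  qed
  have ne0: "N \<noteq> 0"
  proof
    assume "N = 0"
    then have "cps = {}" "E12 G a b = {}" using fin_cps fin_E12 N_def by auto
    then have "edges G = {}" using edges_decomp by simp
    then have "eR G (edges G) UNIV = {}" by (simp add: eR_def)
    moreover have "(a,b) \<in> (eR G (edges G) UNIV)\<^sup>*" using conn av bv by blast
    ultimately show False using ab by simp
  qed
  have ne2: "N \<noteq> 2"
  proof
    assume N2: "N = 2"
    show False
    proof (cases "E12 G a b = {}")
      case False
      then obtain e where e: "e \<in> E12 G a b" by blast
      have "nblocks (contract G e) = 1" using nb_contract e N2 N_def by simp
      moreover have "e \<in> edges G" using e by (simp add: E12_def)
      ultimately show False using hb by fastforce
    next
      case True
      then have "card cps = 2" using N2 N_def by simp
      then obtain C1 C2 where C: "cps = {C1,C2}" "C1 \<noteq> C2" unfolding card_2_iff by blast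
      have key: "\<not> even (int (nblocks (U G a b {C} {})) - 1) \<and>
          (even (int (nblocks (U G a b {C} {})) - 1) \<longleftrightarrow> even (int (nblocks (U G a b {C'} {}))))"
        if h: "C \<in> cps" "cps - {C} = {C'}" for C C'
      proof -
        have X: "{C} \<subseteq> cps" using h by simp
        have F: "{} \<subseteq> E12 G a b" by simp
        have X': "{C'} \<subseteq> cps" using h by auto
        have d: "verts (U G a b {C} {}) \<inter> verts (U G a b {C'} {}) = {a,b}"
          "verts (U G a b {C} {}) \<union> verts (U G a b {C'} {}) = verts G"
          "edges (U G a b {C} {}) \<inter> edges (U G a b {C'} {}) = {}"
          "edges (U G a b {C} {}) \<union> edges (U G a b {C'} {}) = edges G"
          using dec[OF X F] h(2) True by simp_all
        have s1: "subgraph (U G a b {C} {}) G" using U_sub[OF X F] by blast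
        have s2: "subgraph (U G a b {C'} {}) G" using U_sub[OF X' F] by blast
        have c1: "2 \<le> card (edges (U G a b {C} {}))" by (rule card_EU[OF X F]) simp_all
        have c2: "2 \<le> card (edges (U G a b {C'} {}))" by (rule card_EU[OF X' F]) simp_all
        have "nblocks (identify (U G a b {C} {}) a b) = 1" using idU[OF h(1)] nb_Q[OF h(1)] by simp
        then show ?thesis using hc[OF s1 s2 c1 c2 ab d] by auto
      qed
      have C1: "C1 \<in> cps" and C2: "C2 \<in> cps" using C by auto
      have r1: "cps - {C1} = {C2}" and r2: "cps - {C2} = {C1}" using C by auto
      show False using key[OF C1 r1] key[OF C2 r2] by presburger
    qed
  qed
  have le3: "N \<le> 3"
  proof (rule ccontr)
    assume "\<not> N \<le> 3"
    then have N4: "4 \<le> N" by simp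
    define k where "k = min 2 (card cps)"
    have "k \<le> card cps" by (simp add: k_def)
    then obtain X1 where X1: "X1 \<subseteq> cps" "card X1 = k" by (rule obtain_subset_with_card_n) blast
    have "2 - k \<le> card (E12 G a b)" using N4 N_def by (simp add: k_def)
    then obtain F1 where F1: "F1 \<subseteq> E12 G a b" "card F1 = 2 - k" by (rule obtain_subset_with_card_n) blast
    have k2: "k \<le> 2" by (simp add: k_def)
    have X2: "cps - X1 \<subseteq> cps" and F2: "E12 G a b - F1 \<subseteq> E12 G a b" by auto
    have cX2: "card (cps - X1) = card cps - k" using X1 fin_cps by (simp add: card_Diff_subset finite_subset)
    have cF2: "card (E12 G a b - F1) = card (E12 G a b) - (2 - k)"
      using F1 fin_E12 by (simp add: card_Diff_subset finite_subset)
    have s1: "2 \<le> card X1 + card F1" using X1 F1 k2 by simp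
    have s2: "2 \<le> card (cps - X1) + card (E12 G a b - F1)" using cX2 cF2 N4 N_def k2 X1 F1
      by (simp add: k_def)
    have n1: "nblocks (U G a b X1 F1) = 1" by (rule nb_U[OF X1(1) F1(1) s1])
    have n2: "nblocks (U G a b (cps - X1) (E12 G a b - F1)) = 1" by (rule nb_U[OF X2 F2 s2])
    have c1: "2 \<le> card (edges (U G a b X1 F1))" by (rule card_EU[OF X1(1) F1(1)]) (use s1 in simp_all)
    have c2: "2 \<le> card (edges (U G a b (cps - X1) (E12 G a b - F1)))"
      by (rule card_EU[OF X2 F2]) (use s2 in simp_all)
    have sb1: "subgraph (U G a b X1 F1) G" using U_sub[OF X1(1) F1(1)] by blast
    have sb2: "subgraph (U G a b (cps - X1) (E12 G a b - F1)) G" using U_sub[OF X2 F2] by blast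
    show False using hc[OF sb1 sb2 c1 c2 ab dec[OF X1(1) F1(1)]] n1 n2 by simp
  qed
  show ?thesis using nbH ne0 ne2 le3 by auto
qed

end

theorem lemma4p3:
  fixes G :: "('v, 'e) mgraph" and u1 u2 :: 'v
  assumes "Phi G" and "u1 \<in> verts G" and "u2 \<in> verts G" and "u1 \<noteq> u2"
  shows "nblocks (identify G u1 u2) \<in> {1, 3}"
proof -
  interpret twoc G u1 u2
    using assms by unfold_locales (auto simp: Phi_def)
  show ?thesis using main[OF assms(1)] .
qed


end
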